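(* Let $\mathcal{Q}=[0,1]^{\mathbb{N}}$. Let $\cong_{\mathrm{perm}}$ be the equivalence relation on $K(\mathcal{Q})^{\mathbb{N}}$ given by $\vec A\cong_{\mathrm{perm}}\vec B$ iff there are a homeomorphism $f:\mathcal{Q}\to\mathcal{Q}$ and a permutation $\sigma$ of $\mathbb{N}$ with $f[A_n]=B_{\sigma(n)}$ for all $n$. Let $\cong_{(1,1)}$ be the equivalence relation on the space of triples $(X,B,A)$ of compact metric spaces (compact subsets of $\mathcal{Q}$) with $X$ perfect and $A\subseteq B\subseteq X$, given by $(X,B,A)\cong_{(1,1)}(Y,D,C)$ iff there is a homeomorphism $f:X\to Y$ with $f[A]=C$ and $f[B]=D$. Then $\cong_{\mathrm{perm}}\ \leqslant_B\ \cong_{(1,1)}$.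
   Context: $K(\mathcal{Q})$ is the space of compact subsets of the Hilbert cube with the Vietoris topology. A space is perfect if it has no isolated points. For equivalence relations $\mathsf{E}$ on $X$ and $\mathsf{F}$ on $Y$ (standard Borel/Polish spaces), $\mathsf{E}\leqslant_B\mathsf{F}$ means there is a Borel map $f:X\to Y$ with $x\,\mathsf{E}\,y\iff f(x)\,\mathsf{F}\,f(y)$ for all $x,y$. *)

theory Defs
  imports "HOL-Analysis.Analysis"
begin

text \<open>The Hilbert cube Q = [0,1]^N, as a subset of nat \<Rightarrow> real, which carries the
  product topology (library instance for function spaces).\<close>
definition hilbert_cube :: "(nat \<Rightarrow> real) set" where
  "hilbert_cube = {x. \<forall>n. x n \<in> {0..1}}"

text \<open>K(Q): the compact subsets of Q (including the empty set, Kechris' convention).\<close>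
definition KQ :: "(nat \<Rightarrow> real) set set" where
  "KQ = {K. compact K \<and> K \<subseteq> hilbert_cube}"

definition vietoris_KQ :: "(nat \<Rightarrow> real) set topology" where
  "vietoris_KQ = topology_generated_by
     ({{K \<in> KQ. K \<subseteq> U} | U. open U} \<union> {{K \<in> KQ. K \<inter> U \<noteq> {}} | U. open U})"

definition borel_of_top :: "'a topology \<Rightarrow> 'a measure" where
  "borel_of_top T = sigma (topspace T) {U. openin T U}"

definition KQ_borel :: "(nat \<Rightarrow> real) set measure" where
  "KQ_borel = borel_of_top vietoris_KQ"

definition KQ_seq_borel :: "(nat \<Rightarrow> (nat \<Rightarrow> real) set) measure" where
  "KQ_seq_borel = PiM UNIV (\<lambda>_. KQ_borel)"

definition perfect_set :: "'a::topological_space set \<Rightarrow> bool" where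
  "perfect_set X \<longleftrightarrow> (\<forall>x\<in>X. x islimpt X)"

text \<open>Triples (X,B,A) of compact subsets of Q with X perfect and A \<subseteq> B \<subseteq> X,
  encoded as (X,(B,A)).\<close>
definition triples :: "((nat \<Rightarrow> real) set \<times> (nat \<Rightarrow> real) set \<times> (nat \<Rightarrow> real) set) set" where
  "triples = {(X, B, A). X \<in> KQ \<and> B \<in> KQ \<and> A \<in> KQ \<and> perfect_set X \<and> A \<subseteq> B \<and> B \<subseteq> X}"

definition triples_borel :: "((nat \<Rightarrow> real) set \<times> (nat \<Rightarrow> real) set \<times> (nat \<Rightarrow> real) set) measure" where
  "triples_borel = restrict_space (KQ_borel \<Otimes>\<^sub>M (KQ_borel \<Otimes>\<^sub>M KQ_borel)) triples"

definition perm_equiv :: "(nat \<Rightarrow> (nat \<Rightarrow> real) set) \<Rightarrow> (nat \<Rightarrow> (nat \<Rightarrow> real) set) \<Rightarrow> bool" where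
  "perm_equiv A B \<longleftrightarrow> (\<exists>f g \<sigma>. homeomorphism hilbert_cube hilbert_cube f g \<and> bij (\<sigma> :: nat \<Rightarrow> nat)
      \<and> (\<forall>n. f ` A n = B (\<sigma> n)))"

definition equiv_11 :: "((nat \<Rightarrow> real) set \<times> (nat \<Rightarrow> real) set \<times> (nat \<Rightarrow> real) set)
     \<Rightarrow> ((nat \<Rightarrow> real) set \<times> (nat \<Rightarrow> real) set \<times> (nat \<Rightarrow> real) set) \<Rightarrow> bool" where
  "equiv_11 t s \<longleftrightarrow> (case t of (X, B, A) \<Rightarrow> case s of (Y, D, C) \<Rightarrow>
      (\<exists>f g. homeomorphism X Y f g \<and> f ` A = C \<and> f ` B = D))"

definition borel_reducible :: "'a measure \<Rightarrow> ('a \<Rightarrow> 'a \<Rightarrow> bool) \<Rightarrow> 'b measure \<Rightarrow> ('b \<Rightarrow> 'b \<Rightarrow> bool) \<Rightarrow> bool" where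
  "borel_reducible M E N F \<longleftrightarrow> (\<exists>f \<in> measurable M N.
      \<forall>x\<in>space M. \<forall>y\<in>space M. E x y \<longleftrightarrow> F (f x) (f y))"

end

theory Submission imports Defs begin

definition mk :: "(nat\<Rightarrow>real) \<Rightarrow> (nat\<Rightarrow>real) \<Rightarrow> nat \<Rightarrow> real" where
  "mk e q i = (if even i then e (i div 2) else q (i div 2))"
definition ev :: "(nat\<Rightarrow>real) \<Rightarrow> nat \<Rightarrow> real" where "ev x = (\<lambda>k. x (2*k))"
definition od :: "(nat\<Rightarrow>real) \<Rightarrow> nat \<Rightarrow> real" where "od x = (\<lambda>k. x (2*k+1))"

lemma ev_mk[simp]: "ev (mk e q) = e" by (simp add: ev_def mk_def)
lemma od_mk[simp]: "od (mk e q) = q" by (simp add: od_def mk_def)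
lemma mk_ev_od[simp]: "mk (ev x) (od x) = x"
proof
  fix i show "mk (ev x) (od x) i = x i"
    by (cases "even i") (auto simp: mk_def ev_def od_def elim!: evenE oddE)
qed
lemma mk_eq_iff: "x = mk e q \<longleftrightarrow> ev x = e \<and> od x = q"
  by (metis ev_mk mk_ev_od od_mk)

lemma cont_ev: "continuous_on S ev"
  unfolding ev_def by (intro continuous_on_coordinatewise_then_product continuous_on_subset[OF continuous_on_product_coordinates]) auto
lemma cont_od: "continuous_on S od"
  unfolding od_def by (intro continuous_on_coordinatewise_then_product continuous_on_subset[OF continuous_on_product_coordinates]) auto
lemma cont_ev_k: "continuous_on S (\<lambda>x. ev x k)"
  unfolding ev_def by (rule continuous_on_subset[OF continuous_on_product_coordinates]) auto

lemma cont_mk: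
  assumes "continuous_on S a" "continuous_on S b"
  shows "continuous_on S (\<lambda>x. mk (a x) (b x))"
proof (rule continuous_on_coordinatewise_then_product)
  fix i
  show "continuous_on S (\<lambda>x. mk (a x) (b x) i)"
  proof (cases "even i")
    case True
    then show ?thesis unfolding mk_def using continuous_on_product_then_coordinatewise[OF assms(1)] by simp
  next
    case False
    then show ?thesis unfolding mk_def using continuous_on_product_then_coordinatewise[OF assms(2)] by simp
  qed
qed

lemma compact_Q: "compact hilbert_cube"
proof -
  have "compactin (product_topology (\<lambda>_. euclidean) UNIV) (PiE UNIV (\<lambda>_. {0..1::real}))"
    by (simp add: compactin_PiE)
  moreover have "PiE UNIV (\<lambda>_. {0..1::real}) = hilbert_cube"
    by (auto simp: hilbert_cube_def PiE_def extensional_def)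
  ultimately show ?thesis by (metis compactin_euclidean_iff euclidean_product_topology)
qed

lemma closed_Q: "closed hilbert_cube" using compact_Q compact_imp_closed by blast

lemma closed_sub_Q_compact: "closed S \<Longrightarrow> S \<subseteq> hilbert_cube \<Longrightarrow> compact S"
  by (metis compact_Int_closed compact_Q inf.absorb_iff2)

lemma closed_Collect_mem: "closed s \<Longrightarrow> continuous_on UNIV f \<Longrightarrow> closed {x. f x \<in> s}"
  using closed_vimage[of s f] by (simp add: vimage_def)

definition XA :: "(nat \<Rightarrow> (nat\<Rightarrow>real) set) \<Rightarrow> (nat\<Rightarrow>real) set" where
  "XA A = {x. ev x \<in> hilbert_cube \<and> od x \<in> hilbert_cube \<and> (\<forall>j k. j = k \<or> ev x j = 0 \<or> ev x k = 0)
      \<and> (\<forall>n. ev x n = 0 \<or> ev x n = 1 \<or> od x \<in> A n)}"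

definition Base :: "(nat\<Rightarrow>real) set" where
  "Base = {x. ev x = (\<lambda>k. 0) \<and> od x \<in> hilbert_cube}"

lemma closed_XA: assumes "\<And>n. closed (A n)" shows "closed (XA A)"
  unfolding XA_def
  by (intro closed_Collect_conj closed_Collect_all closed_Collect_disj closed_Collect_mem closed_Q cont_ev cont_od
        closed_Collect_eq cont_ev_k continuous_on_const closed_Collect_const assms)

lemma closed_Base: "closed Base"
  unfolding Base_def
  by (intro closed_Collect_conj closed_Collect_mem closed_Q cont_od closed_Collect_eq cont_ev continuous_on_const)

lemma XA_sub: "XA A \<subseteq> hilbert_cube"
proof
  fix x assume "x \<in> XA A"
  then have evQ: "ev x \<in> hilbert_cube" and odQ: "od x \<in> hilbert_cube" by (auto simp: XA_def)
  have "x i \<in> {0..1}" for i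
  proof (cases "even i")
    case True
    then have "x i = ev x (i div 2)" by (simp add: ev_def)
    then show ?thesis using evQ by (simp add: hilbert_cube_def)
  next
    case False
    then have "x i = od x (i div 2)" by (simp add: od_def)
    then show ?thesis using odQ by (simp add: hilbert_cube_def)
  qed
  then show "x \<in> hilbert_cube" by (simp add: hilbert_cube_def)
qed

lemma Base_sub_XA: "Base \<subseteq> XA A"
  by (auto simp: Base_def XA_def hilbert_cube_def)

lemma XA_KQ: assumes "\<And>n. A n \<in> KQ" shows "XA A \<in> KQ"
proof -
  have "closed (A n)" for n using assms[of n] compact_imp_closed by (auto simp: KQ_def)
  then have "closed (XA A)" by (rule closed_XA)
  then show ?thesis using XA_sub compact_Q by (auto simp: KQ_def intro: closed_sub_Q_compact)
qed

lemma Base_KQ: "Base \<in> KQ"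
  using XA_sub[of "\<lambda>_. {}"] Base_sub_XA[of "\<lambda>_. {}"] compact_Q closed_Base
  by (auto simp: KQ_def intro: closed_sub_Q_compact)

lemma limpt_coord:
  fixes x :: "nat \<Rightarrow> real"
  assumes "x k \<in> I" "I = {0..1} \<or> I = {0<..<1}" "\<And>t. t \<in> I \<Longrightarrow> x(k:=t) \<in> S"
  shows "x islimpt S"
  unfolding islimpt_def
proof (intro allI impI)
  fix T assume "x \<in> T" "open T"
  have c: "continuous_on UNIV (\<lambda>t::real. x(k:=t))"
  proof (rule continuous_on_coordinatewise_then_product)
    fix i show "continuous_on UNIV (\<lambda>t::real. (x(k:=t)) i)"
      by (cases "i = k") (simp_all add: continuous_on_id continuous_on_const)
  qed
  have "open ((\<lambda>t. x(k:=t)) -` T)" using open_vimage[OF \<open>open T\<close> c] .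
  moreover have "x k \<in> (\<lambda>t. x(k:=t)) -` T" using \<open>x\<in>T\<close> by simp
  ultimately obtain e where e: "e > 0" "ball (x k) e \<subseteq> (\<lambda>t. x(k:=t)) -` T"
    using open_contains_ball by blast
  define d where "d = min (e/2) (1/4::real)"
  have d: "0 < d" "d \<le> 1/4" "d < e" using e(1) by (auto simp: d_def)
  define t where "t = (if x k \<le> 1/2 then x k + d else x k - d)"
  have "t \<in> I"
  proof (cases "x k \<le> 1/2")
    case True
    then have t: "t = x k + d" by (simp add: t_def)
    from assms(2) show ?thesis
    proof
      assume "I = {0..1}" then show ?thesis using assms(1) True d t by simp
    next
      assume "I = {0<..<1}" then show ?thesis using assms(1) True d t by simp
    qed
  next
    case False
    then have t: "t = x k - d" by (simp add: t_def)
    from assms(2) show ?thesis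
    proof
      assume "I = {0..1}" then show ?thesis using assms(1) False d t by simp
    next
      assume "I = {0<..<1}" then show ?thesis using assms(1) False d t by simp
    qed
  qed
  moreover have "dist (x k) t < e" using d by (simp add: t_def dist_real_def)
  moreover have "t \<noteq> x k" using d by (simp add: t_def)
  then have ne: "x(k:=t) \<noteq> x" by (metis fun_upd_same)
  ultimately show "\<exists>y\<in>S. y \<in> T \<and> y \<noteq> x"
    using e(2) assms(3)[of t] ne by (intro bexI[of _ "x(k:=t)"]) (auto simp: dist_commute)
qed

lemma ev_upd_even: "ev (x(2*n := t)) = (ev x)(n := t)" by (auto simp: ev_def)
lemma od_upd_even: "od (x(2*n := t)) = od x"
proof
  fix k have "2*k+1 \<noteq> 2*n" by presburger
  then show "od (x(2*n := t)) k = od x k" by (simp add: od_def)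
qed
lemma ev_upd_odd: "ev (x(2*n+1 := t)) = ev x"
proof
  fix k have "2*k \<noteq> 2*n+1" by presburger
  then show "ev (x(2*n+1 := t)) k = ev x k" by (simp add: ev_def)
qed
lemma od_upd_odd: "od (x(2*n+1 := t)) = (od x)(n := t)" by (auto simp: od_def)

lemma perfect_XA: "perfect_set (XA A)"
  unfolding perfect_set_def
proof
  fix x assume x: "x \<in> XA A"
  then have evQ: "ev x \<in> hilbert_cube" and odQ: "od x \<in> hilbert_cube"
    and pw: "\<And>j k. j = k \<or> ev x j = 0 \<or> ev x k = 0"
    and cn: "\<And>n. ev x n = 0 \<or> ev x n = 1 \<or> od x \<in> A n" by (auto simp: XA_def)
  show "x islimpt XA A"
  proof (cases "\<exists>n. 0 < ev x n \<and> ev x n < 1")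
    case True
    then obtain n where n: "0 < ev x n" "ev x n < 1" by blast
    have oth: "ev x j = 0" if "j \<noteq> n" for j using pw[of j n] n that by auto
    have on: "od x \<in> A n" using cn[of n] n by auto
    show ?thesis
    proof (rule limpt_coord[where k="2*n" and I="{0<..<1}"])
      show "x (2*n) \<in> {0<..<1}" using n by (simp add: ev_def)
      fix t :: real assume t: "t \<in> {0<..<1}"
      have eq: "x(2*n := t) = mk ((ev x)(n:=t)) (od x)"
        unfolding mk_eq_iff using ev_upd_even od_upd_even by blast
      have m1: "(ev x)(n:=t) \<in> hilbert_cube" using evQ t by (simp add: hilbert_cube_def)
      have m3: "\<forall>j k. j = k \<or> ((ev x)(n:=t)) j = 0 \<or> ((ev x)(n:=t)) k = 0"
      proof (intro allI)
        fix j k show "j = k \<or> ((ev x)(n:=t)) j = 0 \<or> ((ev x)(n:=t)) k = 0"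
          by (cases "j = n"; cases "k = n") (simp_all add: oth)
      qed
      have m4: "\<forall>m. ((ev x)(n:=t)) m = 0 \<or> ((ev x)(n:=t)) m = 1 \<or> od x \<in> A m"
      proof
        fix m show "((ev x)(n:=t)) m = 0 \<or> ((ev x)(n:=t)) m = 1 \<or> od x \<in> A m"
          by (cases "m = n") (simp_all add: oth on)
      qed
      show "x(2*n := t) \<in> XA A"
        unfolding eq XA_def mem_Collect_eq ev_mk od_mk using m1 odQ m3 m4 by blast
    qed simp
  next
    case False
    have b: "ev x n = 0 \<or> ev x n = 1" for n
    proof -
      have "0 \<le> ev x n" "ev x n \<le> 1" using evQ by (auto simp: hilbert_cube_def)
      moreover have "\<not> (0 < ev x n \<and> ev x n < 1)" using False by blast
      ultimately show ?thesis by (smt (verit))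
    qed
    show ?thesis
    proof (rule limpt_coord[where k="2*0+1" and I="{0..1}"])
      have "od x 0 \<in> {0..1}" using odQ by (simp add: hilbert_cube_def)
      then show "x (2*0+1) \<in> {0..1}" by (simp add: od_def)
      fix t :: real assume t: "t \<in> {0..1}"
      have eq: "x(2*0+1 := t) = mk (ev x) ((od x)(0:=t))"
        unfolding mk_eq_iff using ev_upd_odd od_upd_odd by blast
      have c1: "(od x)(0:=t) \<in> hilbert_cube" using odQ t by (auto simp: hilbert_cube_def)
      have b': "\<forall>n. ev x n = 0 \<or> ev x n = 1" using b by blast
      have pw': "\<forall>j k. j = k \<or> ev x j = 0 \<or> ev x k = 0" using pw by blast
      show "x(2*0+1 := t) \<in> XA A"
        unfolding eq XA_def mem_Collect_eq ev_mk od_mk using evQ c1 pw' b' by blast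
    qed simp
  qed
qed


definition KQs :: "(nat \<Rightarrow> (nat\<Rightarrow>real) set) \<Rightarrow> bool" where
  "KQs A \<longleftrightarrow> (\<forall>n. A n \<in> KQ)"

lemma KQs_sub: "KQs A \<Longrightarrow> A n \<subseteq> hilbert_cube" by (auto simp: KQs_def KQ_def)

definition emb :: "(nat\<Rightarrow>real) \<Rightarrow> nat \<Rightarrow> real" where "emb q = mk (\<lambda>k. 0) q"
definition hair :: "nat \<Rightarrow> real \<Rightarrow> (nat\<Rightarrow>real) \<Rightarrow> nat \<Rightarrow> real" where
  "hair n t q = mk (\<lambda>k. if k = n then t else 0) q"
definition pt :: "nat \<Rightarrow> nat \<Rightarrow> real" where "pt n = hair n 1 (\<lambda>k. 0)"
definition Gn :: "(nat \<Rightarrow> (nat\<Rightarrow>real) set) \<Rightarrow> nat \<Rightarrow> (nat\<Rightarrow>real) set" where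
  "Gn A n = {x \<in> XA A. ev x n > 0}"

lemma zero_Q: "(\<lambda>k. 0) \<in> hilbert_cube" by (simp add: hilbert_cube_def)

lemma emb_Base: "q \<in> hilbert_cube \<Longrightarrow> emb q \<in> Base" by (simp add: emb_def Base_def)
lemma Base_emb: "x \<in> Base \<Longrightarrow> x = emb (od x)"
  by (simp add: Base_def emb_def mk_eq_iff)
lemma Base_od: "x \<in> Base \<Longrightarrow> od x \<in> hilbert_cube" by (simp add: Base_def)

lemma hair_in_XA0: assumes "0 \<le> t" "t \<le> 1" "q \<in> hilbert_cube" "t = 0 \<or> t = 1 \<or> q \<in> A n"
  shows "hair n t q \<in> XA A"
proof -
  define e where "e = (\<lambda>k::nat. if k = n then t else (0::real))"
  have m1: "e \<in> hilbert_cube" using assms(1,2) by (simp add: e_def hilbert_cube_def)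
  have m3: "\<forall>j k. j = k \<or> e j = 0 \<or> e k = 0" by (simp add: e_def)
  have m4: "\<forall>m. e m = 0 \<or> e m = 1 \<or> q \<in> A m"
  proof
    fix m show "e m = 0 \<or> e m = 1 \<or> q \<in> A m" using assms(4) by (cases "m = n") (simp_all add: e_def)
  qed
  have "mk e q \<in> XA A" unfolding XA_def mem_Collect_eq ev_mk od_mk using m1 assms(3) m3 m4 by blast
  then show ?thesis by (simp add: hair_def e_def)
qed

lemma ev_hair: "ev (hair n t q) n = t" by (simp add: hair_def)

lemma hair_in_Gn: assumes "KQs A" "0 < t" "t \<le> 1" "t = 1 \<or> q \<in> A n" "q \<in> hilbert_cube"
  shows "hair n t q \<in> Gn A n"
proof -
  have "hair n t q \<in> XA A" using assms by (intro hair_in_XA0) auto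
  then show ?thesis using assms(2) by (simp add: Gn_def ev_hair)
qed

lemma pt_in_Gn: "KQs A \<Longrightarrow> pt n \<in> Gn A n"
  unfolding pt_def by (rule hair_in_Gn) (auto simp: zero_Q)

lemma ev_pt: "ev (pt n) k = (if k = n then 1 else 0)" by (simp add: pt_def hair_def)

lemma Gn_Base: "Gn A n \<inter> Base = {}" by (auto simp: Gn_def Base_def)

lemma cont_hair: "continuous_on S (\<lambda>t. hair n t q)"
  unfolding hair_def
proof (intro cont_mk continuous_on_coordinatewise_then_product continuous_on_const)
  fix i show "continuous_on S (\<lambda>t. if i = n then t else 0)"
    by (cases "i = n") (simp_all add: continuous_on_id continuous_on_const)
qed

lemma cont_hair_q: "continuous_on S (hair n t)"
  unfolding hair_def
  by (intro cont_mk continuous_on_id continuous_on_const)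

lemma connected_Q: "connected hilbert_cube"
proof -
  have "connectedin (product_topology (\<lambda>_. euclidean) UNIV) (PiE UNIV (\<lambda>_. {0..1::real}))"
    by (simp add: connectedin_PiE)
  moreover have "PiE UNIV (\<lambda>_. {0..1::real}) = hilbert_cube"
    by (auto simp: hilbert_cube_def PiE_def extensional_def)
  ultimately show ?thesis by (metis connectedin_iff_connected euclidean_product_topology)
qed

lemma Gn_conn: assumes "KQs A" shows "connected (Gn A n)"
proof -
  define Top where "Top = hair n 1 ` hilbert_cube"
  define H where "H q = (\<lambda>t. hair n t q) ` {0<..1}" for q
  define FF where "FF = insert Top ((\<lambda>q. Top \<union> H q) ` A n)"
  have eq: "Gn A n = \<Union>FF"
  proof
    show "Gn A n \<subseteq> \<Union>FF"
    proof
      fix x assume x: "x \<in> Gn A n"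
      then have xX: "x \<in> XA A" and pos: "ev x n > 0" by (auto simp: Gn_def)
      then have evQ: "ev x \<in> hilbert_cube" and odQ: "od x \<in> hilbert_cube"
        and pw: "\<And>j k. j = k \<or> ev x j = 0 \<or> ev x k = 0"
        and cn0: "\<And>m. ev x m = 0 \<or> ev x m = 1 \<or> od x \<in> A m" by (auto simp: XA_def)
      have cn: "ev x n = 0 \<or> ev x n = 1 \<or> od x \<in> A n" using cn0 by blast
      have oth: "ev x j = 0" if "j \<noteq> n" for j using pw[of j n] pos that by auto
      have "ev x = (\<lambda>k. if k = n then ev x n else 0)"
      proof
        fix k show "ev x k = (if k = n then ev x n else 0)" using oth[of k] by (cases "k = n") simp_all
      qed
      then have xe: "x = hair n (ev x n) (od x)"
        unfolding hair_def mk_eq_iff by simp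
      show "x \<in> \<Union>FF"
      proof (cases "ev x n = 1")
        case True
        then have "x \<in> Top" using xe odQ Top_def by auto
        then show ?thesis by (auto simp: FF_def)
      next
        case False
        then have "od x \<in> A n" using cn pos by (metis less_irrefl)
        moreover have "ev x n \<in> {0<..1}" using pos evQ by (auto simp: hilbert_cube_def)
        ultimately have "x \<in> Top \<union> H (od x)" using xe H_def by auto
        then show ?thesis using \<open>od x \<in> A n\<close> by (auto simp: FF_def)
      qed
    qed
  next
    show "\<Union>FF \<subseteq> Gn A n"
      using KQs_sub[OF assms, of n]
      by (auto simp: FF_def Top_def H_def intro!: hair_in_Gn[OF assms])
  qed
  have cTop: "connected Top"
    unfolding Top_def by (intro connected_continuous_image cont_hair_q connected_Q)
  have cH: "connected (H q)" for q
    unfolding H_def by (intro connected_continuous_image cont_hair connected_Ioc)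
  have "connected (\<Union>FF)"
  proof (rule connected_Union)
    fix s assume "s \<in> FF"
    then show "connected s"
    proof (auto simp: FF_def cTop)
      fix q assume q: "q \<in> A n"
      then have "q \<in> hilbert_cube" using KQs_sub[OF assms] by auto
      then have "hair n 1 q \<in> Top \<inter> H q" by (auto simp: Top_def H_def)
      then show "connected (Top \<union> H q)" using cTop cH connected_Un by blast
    qed
  next
    have "pt n \<in> \<Inter>FF" by (auto simp: FF_def Top_def pt_def zero_Q)
    then show "\<Inter>FF \<noteq> {}" by blast
  qed
  then show ?thesis using eq by simp
qed

lemma XA_notBase: assumes "y \<in> XA A" "y \<notin> Base" shows "\<exists>k. ev y k > 0"
proof (rule ccontr)
  assume "\<not> ?thesis"
  moreover have "ev y k \<ge> 0" for k using assms(1) by (auto simp: XA_def hilbert_cube_def)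
  ultimately have "ev y = (\<lambda>k. 0)"
  proof -
    assume a: "\<not> (\<exists>k. ev y k > 0)" and b: "\<And>k. ev y k \<ge> 0"
    show "ev y = (\<lambda>k. 0)"
    proof
      fix k have "\<not> ev y k > 0" using a by blast
      then show "ev y k = 0" using b[of k] by linarith
    qed
  qed
  then show False using assms by (auto simp: XA_def Base_def)
qed

lemma homeo_notBase:
  assumes h: "homeomorphism (XA A) (XA A') F G" and FB: "F ` Base = Base"
    and x: "x \<in> XA A" "x \<notin> Base"
  shows "F x \<in> XA A' - Base"
proof
  show "F x \<in> XA A'" using homeomorphism_image1[OF h] x by blast
  show "F x \<notin> Base"
  proof
    assume "F x \<in> Base"
    then obtain b where b: "b \<in> Base" "F b = F x" using FB by (metis imageE)
    then have "b \<in> XA A" using Base_sub_XA by blast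
    then have "G (F b) = b" by (rule homeomorphism_apply1[OF h])
    moreover have "G (F x) = x" using homeomorphism_apply1[OF h x(1)] .
    ultimately have "b = x" using b(2) by metis
    then show False using b(1) x(2) by blast
  qed
qed

lemma image_Gn:
  assumes A: "KQs A" and h: "homeomorphism (XA A) (XA A') F G" and FB: "F ` Base = Base"
    and m: "ev (F (pt n)) m > 0"
  shows "F ` Gn A n \<subseteq> Gn A' m"
proof -
  let ?S = "F ` Gn A n"
  have cF: "continuous_on (XA A) F" by (rule homeomorphism_cont1[OF h])
  have "connected ?S"
    by (rule connected_continuous_image[OF continuous_on_subset[OF cF] Gn_conn[OF A]]) (auto simp: Gn_def)
  moreover have sub: "?S \<subseteq> XA A' - Base"
  proof
    fix y assume "y \<in> ?S"
    then obtain x where x: "x \<in> Gn A n" "y = F x" by blast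
    then have "x \<in> XA A" "x \<notin> Base" using Gn_Base by (auto simp: Gn_def)
    then show "y \<in> XA A' - Base" using homeo_notBase[OF h FB] x(2) by blast
  qed
  define U where "U = {x::nat\<Rightarrow>real. ev x m > 0}"
  define V where "V = (\<Union>k\<in>{k. k \<noteq> m}. {x::nat\<Rightarrow>real. ev x k > 0})"
  have oU: "open U" unfolding U_def
    by (rule open_Collect_less[OF continuous_on_const cont_ev_k])
  have oV: "open V" unfolding V_def
    by (intro open_UN ballI open_Collect_less[OF continuous_on_const cont_ev_k])
  have "U \<inter> V \<inter> ?S = {}"
  proof -
    { fix y k assume y: "y \<in> ?S" "ev y m > 0" "ev y k > 0" "k \<noteq> m"
      then have "y \<in> XA A'" using sub by blast
      then have "k = m \<or> ev y k = 0 \<or> ev y m = 0" by (simp add: XA_def)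
      then have False using y by auto }
    then show ?thesis by (auto simp: U_def V_def)
  qed
  moreover have "?S \<subseteq> U \<union> V"
  proof
    fix y assume "y \<in> ?S"
    then obtain k where "ev y k > 0" using sub XA_notBase by blast
    then show "y \<in> U \<union> V" by (cases "k = m") (auto simp: U_def V_def)
  qed
  moreover have "F (pt n) \<in> U \<inter> ?S" using m pt_in_Gn[OF A] by (auto simp: U_def)
  ultimately have "V \<inter> ?S = {}" using connectedD[OF _ oU oV] by blast
  with \<open>?S \<subseteq> U \<union> V\<close> have "?S \<subseteq> U" by blast
  then show ?thesis using sub by (auto simp: Gn_def U_def)
qed

lemma closure_transfer:
  assumes A: "KQs A" and A': "KQs A'" and h: "homeomorphism (XA A) (XA A') F G" and FB: "F ` Base = Base"
    and m: "ev (F (pt n)) m > 0" and q: "q \<in> A n"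
  shows "od (F (emb q)) \<in> A' m"
proof -
  have qQ: "q \<in> hilbert_cube" using q KQs_sub[OF A] by auto
  have clA: "closed (A k)" "closed (A' k)" for k
    using A A' unfolding KQs_def KQ_def by (auto intro: compact_imp_closed)
  have clX: "closed (XA A)" "closed (XA A')" by (intro closed_XA clA)+
  have cF: "continuous_on (XA A) F" by (rule homeomorphism_cont1[OF h])
  define c where "c t = hair n t q" for t
  have "c ` {0<..1} \<subseteq> Gn A n" using qQ q by (auto simp: c_def intro!: hair_in_Gn[OF A])
  have "c ` closure {0<..1} \<subseteq> closure (c ` {0<..1})"
    by (rule continuous_image_closure_subset[of UNIV]) (auto simp: c_def cont_hair)
  moreover have "(0::real) \<in> closure {0<..1}" by simp
  ultimately have "c 0 \<in> closure (Gn A n)"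
    using closure_mono[OF \<open>c ` {0<..1} \<subseteq> Gn A n\<close>] by blast
  moreover have "c 0 = emb q" by (simp add: c_def hair_def emb_def)
  ultimately have e1: "emb q \<in> closure (Gn A n)" by simp
  have clG: "closure (Gn A n) \<subseteq> XA A"
    using closure_minimal[of "Gn A n" "XA A"] clX by (auto simp: Gn_def)
  define C where "C = XA A' \<inter> {x. ev x m = 1 \<or> od x \<in> A' m}"
  have "closed C" unfolding C_def
    by (intro closed_Int clX closed_Collect_disj closed_Collect_eq closed_Collect_mem cont_ev_k
         continuous_on_const cont_od clA)
  moreover have "Gn A' m \<subseteq> C"
  proof
    fix x assume "x \<in> Gn A' m"
    then have x: "x \<in> XA A'" "ev x m > 0" by (auto simp: Gn_def)
    then have "\<forall>k. ev x k = 0 \<or> ev x k = 1 \<or> od x \<in> A' k" by (simp add: XA_def)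
    then have "ev x m = 0 \<or> ev x m = 1 \<or> od x \<in> A' m" by blast
    then show "x \<in> C" using x by (auto simp: C_def)
  qed
  then have "F ` Gn A n \<subseteq> C"
    using image_Gn[OF A h FB m] by blast
  ultimately have "F ` closure (Gn A n) \<subseteq> C"
    using image_closure_subset[OF continuous_on_subset[OF cF clG]] by blast
  then have "F (emb q) \<in> C" using e1 by blast
  moreover have "F (emb q) \<in> Base" using FB emb_Base[OF qQ] by blast
  ultimately show ?thesis by (auto simp: C_def Base_def)
qed

lemma backward:
  assumes A: "KQs A" and A': "KQs A'" and h: "homeomorphism (XA A) (XA A') F G" and FB: "F ` Base = Base"
  shows "perm_equiv A A'"
proof -
  have h': "homeomorphism (XA A') (XA A) G F" using h homeomorphism_sym by blast
  have GF: "\<And>x. x \<in> XA A \<Longrightarrow> G (F x) = x" by (rule homeomorphism_apply1[OF h])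
  have FG: "\<And>y. y \<in> XA A' \<Longrightarrow> F (G y) = y" by (rule homeomorphism_apply2[OF h])
  have GB: "G ` Base = Base"
  proof -
    have "G ` Base = G ` F ` Base" using FB by simp
    also have "\<dots> = (\<lambda>x. G (F x)) ` Base" by (simp add: image_image)
    also have "\<dots> = (\<lambda>x. x) ` Base"
      by (rule image_cong) (use GF Base_sub_XA in auto)
    also have "\<dots> = Base" by simp
    finally show ?thesis .
  qed
  have ptnb: "pt n \<in> XA B" "pt n \<notin> Base" if "KQs B" for n B
    using pt_in_Gn[OF that, of n] Gn_Base[of B n] by (auto simp: Gn_def)
  have exF: "\<exists>m. ev (F (pt n)) m > 0" for n
    using homeo_notBase[OF h FB ptnb[OF A]] XA_notBase by blast
  have exG: "\<exists>m. ev (G (pt n)) m > 0" for n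
    using homeo_notBase[OF h' GB ptnb[OF A']] XA_notBase by blast
  define \<sigma> where "\<sigma> n = (SOME m. ev (F (pt n)) m > 0)" for n
  define \<tau> where "\<tau> n = (SOME m. ev (G (pt n)) m > 0)" for n
  have s: "ev (F (pt n)) (\<sigma> n) > 0" for n unfolding \<sigma>_def using exF by (rule someI_ex)
  have t: "ev (G (pt n)) (\<tau> n) > 0" for n unfolding \<tau>_def using exG by (rule someI_ex)
  have ts: "\<tau> (\<sigma> n) = n" for n
  proof -
    have "F (pt n) \<in> Gn A' (\<sigma> n)" using image_Gn[OF A h FB s] pt_in_Gn[OF A] by blast
    then have "G (F (pt n)) \<in> Gn A (\<tau> (\<sigma> n))" using image_Gn[OF A' h' GB t] by blast
    then have "pt n \<in> Gn A (\<tau> (\<sigma> n))" using GF pt_in_Gn[OF A] by (simp add: Gn_def)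
    then show ?thesis by (auto simp: Gn_def ev_pt split: if_splits)
  qed
  have st: "\<sigma> (\<tau> n) = n" for n
  proof -
    have "G (pt n) \<in> Gn A (\<tau> n)" using image_Gn[OF A' h' GB t] pt_in_Gn[OF A'] by blast
    then have "F (G (pt n)) \<in> Gn A' (\<sigma> (\<tau> n))" using image_Gn[OF A h FB s] by blast
    then have "pt n \<in> Gn A' (\<sigma> (\<tau> n))" using FG pt_in_Gn[OF A'] by (simp add: Gn_def)
    then show ?thesis by (auto simp: Gn_def ev_pt split: if_splits)
  qed
  have bij: "bij \<sigma>" by (rule o_bij[of \<tau>]) (auto simp: ts st)
  define f where "f q = od (F (emb q))" for q
  define g where "g q = od (G (emb q))" for q
  have FemB: "F (emb q) = emb (f q)" "f q \<in> hilbert_cube" if "q \<in> hilbert_cube" for q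
  proof -
    have "F (emb q) \<in> Base" using emb_Base[OF that] FB by blast
    then show "F (emb q) = emb (f q)" "f q \<in> hilbert_cube" unfolding f_def
      using Base_emb Base_od by auto
  qed
  have GemB: "G (emb q) = emb (g q)" "g q \<in> hilbert_cube" if "q \<in> hilbert_cube" for q
  proof -
    have "G (emb q) \<in> Base" using emb_Base[OF that] GB by blast
    then show "G (emb q) = emb (g q)" "g q \<in> hilbert_cube" unfolding g_def
      using Base_emb Base_od by auto
  qed
  have embX: "emb q \<in> XA A" "emb q \<in> XA A'" if "q \<in> hilbert_cube" for q
    using emb_Base[OF that] Base_sub_XA by blast+
  have gf: "g (f q) = q" if "q \<in> hilbert_cube" for q
  proof -
    have "emb (g (f q)) = emb q"
      using FemB(1)[OF that] GemB(1)[OF FemB(2)[OF that]] GF[OF embX(1)[OF that]] by simp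
    then show ?thesis by (metis emb_def od_mk)
  qed
  have fg: "f (g q) = q" if "q \<in> hilbert_cube" for q
  proof -
    have "emb (f (g q)) = emb q"
      using GemB(1)[OF that] FemB(1)[OF GemB(2)[OF that]] FG[OF embX(2)[OF that]] by simp
    then show ?thesis by (metis emb_def od_mk)
  qed
  have cemb: "continuous_on S emb" for S unfolding emb_def by (intro cont_mk continuous_on_const continuous_on_id)
  have cF: "continuous_on (XA A) F" by (rule homeomorphism_cont1[OF h])
  have cG: "continuous_on (XA A') G" by (rule homeomorphism_cont2[OF h])
  have cf: "continuous_on hilbert_cube f"
    unfolding f_def
    by (intro continuous_on_compose2[OF cont_od continuous_on_compose2[OF cF cemb]]) (auto intro: embX)
  have cg: "continuous_on hilbert_cube g"
    unfolding g_def
    by (intro continuous_on_compose2[OF cont_od continuous_on_compose2[OF cG cemb]]) (auto intro: embX)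
  have hom: "homeomorphism hilbert_cube hilbert_cube f g"
    by (rule homeomorphismI[OF cf cg]) (auto intro: FemB GemB gf fg)
  have img: "f ` A n = A' (\<sigma> n)" for n
  proof
    show "f ` A n \<subseteq> A' (\<sigma> n)"
      using closure_transfer[OF A A' h FB s] unfolding f_def by blast
    show "A' (\<sigma> n) \<subseteq> f ` A n"
    proof
      fix q assume q: "q \<in> A' (\<sigma> n)"
      then have qQ: "q \<in> hilbert_cube" using KQs_sub[OF A'] by blast
      have "g q \<in> A (\<tau> (\<sigma> n))"
        using closure_transfer[OF A' A h' GB t q] unfolding g_def by blast
      then have "g q \<in> A n" by (simp add: ts)
      then show "q \<in> f ` A n" using fg[OF qQ] by (metis image_eqI)
    qed
  qed
  show ?thesis unfolding perm_equiv_def using hom bij img by blast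
qed

lemma forward:
  assumes A: "KQs A" and A': "KQs A'" and pe: "perm_equiv A A'"
  shows "\<exists>F G. homeomorphism (XA A) (XA A') F G \<and> F ` Base = Base"
proof -
  obtain f g \<sigma> where hom: "homeomorphism hilbert_cube hilbert_cube f g" and bij: "bij (\<sigma>::nat\<Rightarrow>nat)"
    and img: "\<And>n. f ` A n = A' (\<sigma> n)" using pe unfolding perm_equiv_def by blast
  define s where "s = inv \<sigma>"
  have ss: "\<sigma> (s m) = m" "s (\<sigma> n) = n" for m n
    using bij unfolding s_def by (auto simp: bij_def surj_f_inv_f inv_f_f)
  have gf: "\<And>x. x \<in> hilbert_cube \<Longrightarrow> g (f x) = x" by (rule homeomorphism_apply1[OF hom])
  have fg: "\<And>y. y \<in> hilbert_cube \<Longrightarrow> f (g y) = y" by (rule homeomorphism_apply2[OF hom])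
  have fQ: "f ` hilbert_cube = hilbert_cube" by (rule homeomorphism_image1[OF hom])
  have gQ: "g ` hilbert_cube = hilbert_cube" by (rule homeomorphism_image2[OF hom])
  have cf: "continuous_on hilbert_cube f" by (rule homeomorphism_cont1[OF hom])
  have cg: "continuous_on hilbert_cube g" by (rule homeomorphism_cont2[OF hom])
  have gimg: "g ` A' (\<sigma> n) = A n" for n
  proof -
    have "g ` A' (\<sigma> n) = g ` f ` A n" using img by simp
    also have "\<dots> = (\<lambda>x. g (f x)) ` A n" by (simp add: image_image)
    also have "\<dots> = (\<lambda>x. x) ` A n"
      by (rule image_cong) (use gf KQs_sub[OF A] in auto)
    also have "\<dots> = A n" by simp
    finally show ?thesis .
  qed
  define F where "F x = mk (ev x \<circ> s) (f (od x))" for x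
  define G where "G y = mk (ev y \<circ> \<sigma>) (g (od y))" for y
  have odX: "od ` XA B \<subseteq> hilbert_cube" for B by (auto simp: XA_def)
  have cevs: "continuous_on S (\<lambda>x. ev x \<circ> p)" for S and p :: "nat \<Rightarrow> nat"
    by (intro continuous_on_coordinatewise_then_product) (simp add: cont_ev_k)
  have cF: "continuous_on (XA A) F" unfolding F_def
    by (intro cont_mk cevs continuous_on_compose2[OF cf cont_od odX])
  have cG: "continuous_on (XA A') G" unfolding G_def
    by (intro cont_mk cevs continuous_on_compose2[OF cg cont_od odX])
  have FX: "F x \<in> XA A'" if x: "x \<in> XA A" for x
  proof -
    have evQ: "ev x \<in> hilbert_cube" and odQ: "od x \<in> hilbert_cube"
      and pw: "\<And>j k. j = k \<or> ev x j = 0 \<or> ev x k = 0"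
      and cn: "\<And>n. ev x n = 0 \<or> ev x n = 1 \<or> od x \<in> A n" using x by (auto simp: XA_def)
    have a4: "\<forall>m. ev x (s m) = 0 \<or> ev x (s m) = 1 \<or> f (od x) \<in> A' m"
    proof
      fix m
      have "f (od x) \<in> A' m" if "od x \<in> A (s m)"
      proof -
        have "f (od x) \<in> f ` A (s m)" using that by blast
        then show ?thesis using img[of "s m"] ss(1)[of m] by simp
      qed
      then show "ev x (s m) = 0 \<or> ev x (s m) = 1 \<or> f (od x) \<in> A' m" using cn[of "s m"] by blast
    qed
    have a3: "\<forall>j k. j = k \<or> ev x (s j) = 0 \<or> ev x (s k) = 0"
    proof (intro allI)
      fix j k
      show "j = k \<or> ev x (s j) = 0 \<or> ev x (s k) = 0"
      proof (cases "j = k")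
        case False
        then have "s j \<noteq> s k" using ss(1)[of j] ss(1)[of k] by auto
        then show ?thesis using pw[of "s j" "s k"] by blast
      qed simp
    qed
    have a1: "ev x \<circ> s \<in> hilbert_cube" using evQ by (simp add: hilbert_cube_def)
    have a2: "f (od x) \<in> hilbert_cube" using fQ odQ by blast
    show ?thesis using a1 a2 a3 a4 by (simp add: XA_def F_def)
  qed
  have GX: "G y \<in> XA A" if y: "y \<in> XA A'" for y
  proof -
    have evQ: "ev y \<in> hilbert_cube" and odQ: "od y \<in> hilbert_cube"
      and pw: "\<And>j k. j = k \<or> ev y j = 0 \<or> ev y k = 0"
      and cn: "\<And>n. ev y n = 0 \<or> ev y n = 1 \<or> od y \<in> A' n" using y by (auto simp: XA_def)
    have a4: "\<forall>m. ev y (\<sigma> m) = 0 \<or> ev y (\<sigma> m) = 1 \<or> g (od y) \<in> A m"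
    proof
      fix m
      have "g (od y) \<in> A m" if "od y \<in> A' (\<sigma> m)"
      proof -
        have "g (od y) \<in> g ` A' (\<sigma> m)" using that by blast
        then show ?thesis using gimg[of m] by simp
      qed
      then show "ev y (\<sigma> m) = 0 \<or> ev y (\<sigma> m) = 1 \<or> g (od y) \<in> A m" using cn[of "\<sigma> m"] by blast
    qed
    have a3: "\<forall>j k. j = k \<or> ev y (\<sigma> j) = 0 \<or> ev y (\<sigma> k) = 0"
    proof (intro allI)
      fix j k
      show "j = k \<or> ev y (\<sigma> j) = 0 \<or> ev y (\<sigma> k) = 0"
      proof (cases "j = k")
        case False
        then have "\<sigma> j \<noteq> \<sigma> k" using ss(2)[of j] ss(2)[of k] by auto
        then show ?thesis using pw[of "\<sigma> j" "\<sigma> k"] by blast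
      qed simp
    qed
    have a1: "ev y \<circ> \<sigma> \<in> hilbert_cube" using evQ by (simp add: hilbert_cube_def)
    have a2: "g (od y) \<in> hilbert_cube" using gQ odQ by blast
    show ?thesis using a1 a2 a3 a4 by (simp add: XA_def G_def)
  qed
  have GF: "G (F x) = x" if "x \<in> XA A" for x
  proof -
    have "od x \<in> hilbert_cube" using that by (auto simp: XA_def)
    then have e2: "g (f (od x)) = od x" using gf by blast
    have e1: "ev x \<circ> s \<circ> \<sigma> = ev x" by (rule ext) (simp add: ss)
    have "G (F x) = mk (ev x \<circ> s \<circ> \<sigma>) (g (f (od x)))" by (simp add: F_def G_def)
    also have "\<dots> = mk (ev x) (od x)" by (simp only: e1 e2)
    finally show ?thesis by simp
  qed
  have FG: "F (G y) = y" if "y \<in> XA A'" for y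
  proof -
    have "od y \<in> hilbert_cube" using that by (auto simp: XA_def)
    then have e2: "f (g (od y)) = od y" using fg by blast
    have e1: "ev y \<circ> \<sigma> \<circ> s = ev y" by (rule ext) (simp add: ss)
    have "F (G y) = mk (ev y \<circ> \<sigma> \<circ> s) (f (g (od y)))" by (simp add: F_def G_def)
    also have "\<dots> = mk (ev y) (od y)" by (simp only: e1 e2)
    finally show ?thesis by simp
  qed
  have homF: "homeomorphism (XA A) (XA A') F G"
    by (rule homeomorphismI[OF cF cG]) (auto intro: FX GX GF FG)
  have FB1: "F x \<in> Base" if "x \<in> Base" for x
    using that fQ unfolding Base_def F_def by (auto simp: comp_def)
  have GB1: "G y \<in> Base" if "y \<in> Base" for y
    using that gQ unfolding Base_def G_def by (auto simp: comp_def)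
  have "F ` Base = Base"
  proof
    show "F ` Base \<subseteq> Base" using FB1 by blast
    show "Base \<subseteq> F ` Base"
    proof
      fix y assume y: "y \<in> Base"
      then have "F (G y) = y" using FG Base_sub_XA by blast
      then show "y \<in> F ` Base" using GB1[OF y] by (metis image_eqI)
    qed
  qed
  then show ?thesis using homF by blast
qed

definition Lo :: "(nat\<Rightarrow>real) set \<Rightarrow> (nat\<Rightarrow>real) set set" where "Lo U = {K \<in> KQ. K \<subseteq> U}"
definition Hi :: "(nat\<Rightarrow>real) set \<Rightarrow> (nat\<Rightarrow>real) set set" where "Hi U = {K \<in> KQ. K \<inter> U \<noteq> {}}"
definition SB :: "(nat\<Rightarrow>real) set set set" where
  "SB = {Lo U | U. open U} \<union> {Hi U | U. open U}"

lemma vietoris_eq: "vietoris_KQ = topology_generated_by SB"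
  unfolding vietoris_KQ_def SB_def Lo_def Hi_def ..

lemma topspace_vietoris: "topspace vietoris_KQ = KQ"
proof -
  have "\<Union>SB \<subseteq> KQ" by (auto simp: SB_def Lo_def Hi_def)
  moreover have "KQ \<subseteq> \<Union>SB"
  proof
    fix K assume "K \<in> KQ"
    then have "K \<in> Lo UNIV" by (simp add: Lo_def)
    then show "K \<in> \<Union>SB" unfolding SB_def by blast
  qed
  ultimately have "\<Union>SB = KQ" by (rule antisym)
  then show ?thesis by (simp add: vietoris_eq)
qed

lemma space_KQ_borel: "space KQ_borel = KQ"
  by (simp add: KQ_borel_def borel_of_top_def topspace_vietoris space_measure_of_conv)

lemma sets_KQ_borel: "sets KQ_borel = sigma_sets KQ {U. openin vietoris_KQ U}"
proof -
  have "{U. openin vietoris_KQ U} \<subseteq> Pow KQ" using openin_subset topspace_vietoris by blast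
  then show ?thesis by (simp add: KQ_borel_def borel_of_top_def topspace_vietoris sets_measure_of)
qed

lemma SB_sets: "S \<in> SB \<Longrightarrow> S \<in> sets KQ_borel"
proof -
  assume "S \<in> SB"
  then have "openin vietoris_KQ S"
    by (simp add: vietoris_eq openin_topology_generated_by_iff generate_topology_on.Basis)
  then show ?thesis by (simp add: sets_KQ_borel)
qed

lemma Lo_sets: "open U \<Longrightarrow> Lo U \<in> sets KQ_borel" by (rule SB_sets) (auto simp: SB_def)
lemma Hi_sets: "open U \<Longrightarrow> Hi U \<in> sets KQ_borel" by (rule SB_sets) (auto simp: SB_def)

lemma space_seq: "space KQ_seq_borel = {A. \<forall>n. A n \<in> KQ}"
  by (auto simp: KQ_seq_borel_def space_PiM space_KQ_borel PiE_def extensional_def)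

lemma comp_sets: "S \<in> sets KQ_borel \<Longrightarrow> (\<lambda>A. A n) -` S \<inter> space KQ_seq_borel \<in> sets KQ_seq_borel"
  unfolding KQ_seq_borel_def
  by (rule measurable_sets[OF measurable_component_singleton]) auto

lemma bexI_rot3: "N \<in> C \<Longrightarrow> K \<in> N \<Longrightarrow> N \<subseteq> S \<Longrightarrow> \<exists>N\<in>C. K \<in> N \<and> N \<subseteq> S"
  by blast

lemma countable_reduction:
  obtains CB where "countable CB" "\<And>N. N \<in> CB \<Longrightarrow> \<exists>F. finite F \<and> N = KQ \<inter> \<Inter>F \<and>
        (\<forall>S\<in>F. (\<exists>W. open W \<and> S = Lo W) \<or> (\<exists>W. open W \<and> S = Hi W))"
    "\<And>Op K. openin vietoris_KQ Op \<Longrightarrow> K \<in> Op \<Longrightarrow> \<exists>N\<in>CB. K \<in> N \<and> N \<subseteq> Op"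
proof -
  obtain B :: "(nat\<Rightarrow>real) set set" where B: "countable B" "topological_basis B"
    using ex_countable_basis by blast
  define S0 where "S0 = (\<lambda>F. Lo (\<Union>F)) ` {F. finite F \<and> F \<subseteq> B} \<union> Hi ` B"
  define CB where "CB = (\<lambda>F. KQ \<inter> \<Inter>F) ` {F. finite F \<and> F \<subseteq> S0}"
  have cS0: "countable S0" unfolding S0_def
    using B(1) by (intro countable_Un countable_image countable_Collect_finite_subset) auto
  have c1: "countable CB" unfolding CB_def
    using cS0 by (intro countable_image countable_Collect_finite_subset)
  have oB: "b \<in> B \<Longrightarrow> open b" for b using B(2) topological_basis_open by blast
  have c2: "\<exists>F. finite F \<and> N = KQ \<inter> \<Inter>F \<and>
        (\<forall>S\<in>F. (\<exists>W. open W \<and> S = Lo W) \<or> (\<exists>W. open W \<and> S = Hi W))" if "N \<in> CB" for N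
  proof -
    obtain F where F: "finite F" "F \<subseteq> S0" "N = KQ \<inter> \<Inter>F" using \<open>N \<in> CB\<close> unfolding CB_def by blast
    have "(\<exists>W. open W \<and> S = Lo W) \<or> (\<exists>W. open W \<and> S = Hi W)" if "S \<in> F" for S
    proof -
      have "S \<in> S0" using F that by blast
      then consider F' where "finite F'" "F' \<subseteq> B" "S = Lo (\<Union>F')" | b where "b \<in> B" "S = Hi b"
        unfolding S0_def by blast
      then show ?thesis
      proof cases
        case 1
        then have "open (\<Union>F')" using oB by blast
        then show ?thesis using 1 by blast
      next
        case 2
        then show ?thesis using oB by blast
      qed
    qed
    then show ?thesis using F by blast
  qed
  have key: "K \<in> Op \<Longrightarrow> \<exists>N\<in>CB. K \<in> N \<and> N \<subseteq> Op" if "generate_topology_on SB Op" for Op K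
    using that
  proof (induction arbitrary: K rule: generate_topology_on.induct)
    case Empty then show ?case by simp
  next
    case (Int a b)
    obtain N1 where N1: "N1 \<in> CB" "K \<in> N1" "N1 \<subseteq> a" using Int by blast
    obtain N2 where N2: "N2 \<in> CB" "K \<in> N2" "N2 \<subseteq> b" using Int by blast
    obtain F1 where F1: "finite F1" "F1 \<subseteq> S0" "N1 = KQ \<inter> \<Inter>F1" using N1(1) unfolding CB_def by blast
    obtain F2 where F2: "finite F2" "F2 \<subseteq> S0" "N2 = KQ \<inter> \<Inter>F2" using N2(1) unfolding CB_def by blast
    have "KQ \<inter> \<Inter>(F1 \<union> F2) \<in> CB" unfolding CB_def using F1 F2 by blast
    moreover have "KQ \<inter> \<Inter>(F1 \<union> F2) = N1 \<inter> N2" using F1 F2 by auto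
    ultimately have "N1 \<inter> N2 \<in> CB" by simp
    moreover have "K \<in> N1 \<inter> N2 \<and> N1 \<inter> N2 \<subseteq> a \<inter> b" using N1 N2 by blast
    ultimately show ?case by blast
  next
    case (UN KK)
    from UN.prems obtain k where k: "k \<in> KK" "K \<in> k" by blast
    from UN.IH[OF k] obtain N where "N \<in> CB" "K \<in> N" "N \<subseteq> k" by blast
    then show ?case using k(1) by blast
  next
    case (Basis s)
    from Basis.hyps consider U where "open U" "s = Lo U" | U where "open U" "s = Hi U" unfolding SB_def by blast
    then show ?case
    proof cases
      case 1
      then have KU: "K \<in> KQ" "K \<subseteq> U" using Basis.prems by (auto simp: Lo_def)
      then have cK: "compact K" by (simp add: KQ_def)
      have cov: "K \<subseteq> \<Union>{b \<in> B. b \<subseteq> U}"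
      proof
        fix x assume "x \<in> K"
        then obtain b where "b \<in> B" "x \<in> b" "b \<subseteq> U"
          using topological_basisE[OF B(2) \<open>open U\<close>] KU by blast
        then show "x \<in> \<Union>{b \<in> B. b \<subseteq> U}" by blast
      qed
      have oT: "\<And>b. b \<in> {b \<in> B. b \<subseteq> U} \<Longrightarrow> open b" using oB by blast
      obtain T where T: "T \<subseteq> {b \<in> B. b \<subseteq> U}" "finite T" "K \<subseteq> \<Union>T"
        using compactE[OF cK cov oT] by blast
      have "Lo (\<Union>T) \<in> S0" unfolding S0_def using T by blast
      then have "{Lo (\<Union>T)} \<in> {F. finite F \<and> F \<subseteq> S0}" by simp
      then have "KQ \<inter> \<Inter>{Lo (\<Union>T)} \<in> CB" unfolding CB_def by (rule imageI)
      moreover have "K \<in> KQ \<inter> \<Inter>{Lo (\<Union>T)}" using KU T by (auto simp: Lo_def)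
      moreover have "KQ \<inter> \<Inter>{Lo (\<Union>T)} \<subseteq> s"
      proof -
        have "\<Union>T \<subseteq> U" using T(1) by blast
        then show ?thesis using 1 by (auto simp: Lo_def)
      qed
      ultimately show ?thesis by (rule bexI_rot3)
    next
      case 2
      then have KU: "K \<in> KQ" "K \<inter> U \<noteq> {}" using Basis.prems by (auto simp: Hi_def)
      then obtain x where "x \<in> K" "x \<in> U" by blast
      then obtain b where b: "b \<in> B" "x \<in> b" "b \<subseteq> U"
        using topological_basisE[OF B(2) \<open>open U\<close>] by blast
      have "Hi b \<in> S0" unfolding S0_def using b by blast
      then have "{Hi b} \<in> {F. finite F \<and> F \<subseteq> S0}" by simp
      then have "KQ \<inter> \<Inter>{Hi b} \<in> CB" unfolding CB_def by (rule imageI)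
      moreover have "K \<in> KQ \<inter> \<Inter>{Hi b}" using KU b \<open>x \<in> K\<close> by (auto simp: Hi_def)
      moreover have "KQ \<inter> \<Inter>{Hi b} \<subseteq> s" using 2 b by (auto simp: Hi_def)
      ultimately show ?thesis by (rule bexI_rot3)
    qed
  qed
  have c3: "\<exists>N\<in>CB. K \<in> N \<and> N \<subseteq> Op" if "openin vietoris_KQ Op" "K \<in> Op" for Op K
    using key that by (simp add: vietoris_eq openin_topology_generated_by_iff)
  show ?thesis by (rule that[OF c1 c2 c3])
qed

definition Top :: "nat \<Rightarrow> (nat\<Rightarrow>real) set" where "Top n = hair n 1 ` hilbert_cube"
definition hairs :: "nat \<Rightarrow> (nat\<Rightarrow>real) set \<Rightarrow> (nat\<Rightarrow>real) set" where
  "hairs n S = (\<lambda>(t,q). hair n t q) ` ({0..1} \<times> S)"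

lemma hair_in_XA: assumes "0 \<le> t" "t \<le> 1" "q \<in> hilbert_cube" "t = 0 \<or> t = 1 \<or> q \<in> A n"
  shows "hair n t q \<in> XA A"
  using assms by (intro hair_in_XA0[where A=A and n=n]) auto

lemma hairs_sub: "hairs n S \<subseteq> W \<longleftrightarrow> S \<subseteq> {q. \<forall>t\<in>{0..1}. hair n t q \<in> W}"
  unfolding hairs_def by auto

lemma hairs_meet: "hairs n S \<inter> W \<noteq> {} \<longleftrightarrow> S \<inter> {q. \<exists>t\<in>{0..1}. hair n t q \<in> W} \<noteq> {}"
  unfolding hairs_def by auto

lemma XA_decomp:
  assumes "\<And>n. A n \<subseteq> hilbert_cube"
  shows "XA A = Base \<union> (\<Union>n. Top n) \<union> (\<Union>n. hairs n (A n))"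
proof
  show "XA A \<subseteq> Base \<union> (\<Union>n. Top n) \<union> (\<Union>n. hairs n (A n))"
  proof
    fix x assume x: "x \<in> XA A"
    then have evQ: "ev x \<in> hilbert_cube" and odQ: "od x \<in> hilbert_cube"
      and pw: "\<And>j k. j = k \<or> ev x j = 0 \<or> ev x k = 0"
      and cn: "\<And>n. ev x n = 0 \<or> ev x n = 1 \<or> od x \<in> A n" by (auto simp: XA_def)
    show "x \<in> Base \<union> (\<Union>n. Top n) \<union> (\<Union>n. hairs n (A n))"
    proof (cases "ev x = (\<lambda>k. 0)")
      case True
      then show ?thesis using odQ by (auto simp: Base_def)
    next
      case False
      then obtain n where n: "ev x n \<noteq> 0" by auto
      have oth: "ev x j = 0" if "j \<noteq> n" for j using pw[of j n] n that by auto
      have "ev x = (\<lambda>k. if k = n then ev x n else 0)"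
      proof
        fix k show "ev x k = (if k = n then ev x n else 0)" using oth[of k] by (cases "k = n") simp_all
      qed
      then have xe: "x = hair n (ev x n) (od x)"
        unfolding hair_def mk_eq_iff by simp
      show ?thesis
      proof (cases "ev x n = 1")
        case True
        then have "x \<in> Top n" using xe odQ by (auto simp: Top_def)
        then show ?thesis by blast
      next
        case False
        then have "od x \<in> A n" using cn[of n] n by auto
        moreover have "ev x n \<in> {0..1}" using evQ by (auto simp: hilbert_cube_def)
        ultimately have "x \<in> hairs n (A n)"
          unfolding hairs_def using xe by (auto intro!: image_eqI[of _ _ "(ev x n, od x)"])
        then show ?thesis by blast
      qed
    qed
  qed
next
  have "Top n \<subseteq> XA A" for n unfolding Top_def by (auto intro!: hair_in_XA)
  moreover have "hairs n (A n) \<subseteq> XA A" for n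
    unfolding hairs_def using assms by (auto intro!: hair_in_XA)
  ultimately show "Base \<union> (\<Union>n. Top n) \<union> (\<Union>n. hairs n (A n)) \<subseteq> XA A"
    using Base_sub_XA by blast
qed

lemma cont_hair2: "continuous_on UNIV (\<lambda>p::(nat\<Rightarrow>real)\<times>real. hair n (snd p) (fst p))"
  unfolding hair_def
proof (rule continuous_on_coordinatewise_then_product)
  fix i
  have c1: "continuous_on UNIV (\<lambda>p::(nat\<Rightarrow>real)\<times>real. fst p j)" for j
    by (rule continuous_on_product_then_coordinatewise) (intro continuous_intros)
  have c2: "continuous_on UNIV (\<lambda>p::(nat\<Rightarrow>real)\<times>real. snd p)"
    by (intro continuous_intros)
  show "continuous_on UNIV (\<lambda>p::(nat\<Rightarrow>real)\<times>real. mk (\<lambda>k. if k = n then snd p else 0) (fst p) i)"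
    unfolding mk_def
    by (cases "even i"; cases "i div 2 = n") (simp_all add: c1 c2 continuous_on_const)
qed

lemma open_V_aux:
  assumes "open W" and q0: "\<forall>t\<in>{0..1}. hair n t q0 \<in> W"
  shows "\<exists>X0. open X0 \<and> q0 \<in> X0 \<and> X0 \<subseteq> {q. \<forall>t\<in>{0..1}. hair n t q \<in> W}"
proof -
  define W' where "W' = (\<lambda>p::(nat\<Rightarrow>real)\<times>real. hair n (snd p) (fst p)) -` W"
  have "open W'" unfolding W'_def using open_vimage[OF assms(1) cont_hair2] .
  moreover have "{q0} \<times> {0..1} \<subseteq> W'" using q0 by (auto simp: W'_def)
  ultimately obtain X0 where X0: "q0 \<in> X0" "open X0" "X0 \<times> {0..1::real} \<subseteq> W'"
    using Elementary_Topology.tube_lemma[of "{0..1::real}" W' q0] by auto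
  have "X0 \<subseteq> {q. \<forall>t\<in>{0..1}. hair n t q \<in> W}"
  proof
    fix q assume q: "q \<in> X0"
    have "hair n t q \<in> W" if t: "t \<in> {0..1}" for t
    proof -
      have "(q, t) \<in> X0 \<times> {0..1}" using q t by blast
      then have "(q, t) \<in> W'" using X0(3) by blast
      then show ?thesis by (simp add: W'_def)
    qed
    then show "q \<in> {q. \<forall>t\<in>{0..1}. hair n t q \<in> W}" by blast
  qed
  then show ?thesis using X0(1,2) by blast
qed

lemma open_V: assumes "open W" shows "open {q. \<forall>t\<in>{0..1}. hair n t q \<in> W}"
proof (rule Topological_Spaces.openI)
  fix q0 assume "q0 \<in> {q. \<forall>t\<in>{0..1}. hair n t q \<in> W}"
  then show "\<exists>T. open T \<and> q0 \<in> T \<and> T \<subseteq> {q. \<forall>t\<in>{0..1}. hair n t q \<in> W}"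
    using open_V_aux[OF assms] by blast
qed

lemma open_V': assumes "open W" shows "open {q. \<exists>t\<in>{0..1}. hair n t q \<in> W}"
proof -
  have "{q. \<exists>t\<in>{0..1}. hair n t q \<in> W} = (\<Union>t\<in>{0..1}. hair n t -` W)" by auto
  moreover have "open (hair n t -` W)" for t
    using open_vimage[OF assms cont_hair_q] by blast
  ultimately show ?thesis by auto
qed

lemma Lo_pre: assumes "open W" shows "XA -` Lo W \<inter> space KQ_seq_borel \<in> sets KQ_seq_borel"
proof -
  define V where "V n = {q. \<forall>t\<in>{0..1}. hair n t q \<in> W}" for n
  define C where "C = (Base \<subseteq> W \<and> (\<forall>n. Top n \<subseteq> W))"
  have eq: "XA -` Lo W \<inter> space KQ_seq_borel =
      (if C then (\<Inter>n. (\<lambda>A. A n) -` Lo (V n) \<inter> space KQ_seq_borel) else {})"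
  proof (intro set_eqI)
    fix A
    show "A \<in> XA -` Lo W \<inter> space KQ_seq_borel \<longleftrightarrow>
      A \<in> (if C then (\<Inter>n. (\<lambda>A. A n) -` Lo (V n) \<inter> space KQ_seq_borel) else {})"
    proof (cases "A \<in> space KQ_seq_borel")
      case True
      then have K: "\<And>n. A n \<in> KQ" by (simp add: space_seq)
      then have sub: "\<And>n. A n \<subseteq> hilbert_cube" by (auto simp: KQ_def)
      have "XA A \<subseteq> W \<longleftrightarrow> Base \<subseteq> W \<and> (\<forall>n. Top n \<subseteq> W) \<and> (\<forall>n. hairs n (A n) \<subseteq> W)"
        unfolding XA_decomp[OF sub] by (simp only: Un_subset_iff UN_subset_iff ball_UNIV conj_assoc)
      then have "XA A \<subseteq> W \<longleftrightarrow> C \<and> (\<forall>n. A n \<subseteq> V n)"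
        unfolding C_def V_def hairs_sub by blast
      then show ?thesis using True K XA_KQ[OF K] by (auto simp: Lo_def)
    qed auto
  qed
  have "(\<Inter>n. (\<lambda>A. A n) -` Lo (V n) \<inter> space KQ_seq_borel) \<in> sets KQ_seq_borel"
    using comp_sets[OF Lo_sets[OF open_V[OF assms]]] unfolding V_def
    by (intro sets.countable_INT) auto
  then show ?thesis using eq by simp
qed

lemma Hi_pre: assumes "open W" shows "XA -` Hi W \<inter> space KQ_seq_borel \<in> sets KQ_seq_borel"
proof -
  define V where "V n = {q. \<exists>t\<in>{0..1}. hair n t q \<in> W}" for n
  define C where "C = (Base \<inter> W \<noteq> {} \<or> (\<exists>n. Top n \<inter> W \<noteq> {}))"
  have eq: "XA -` Hi W \<inter> space KQ_seq_borel =
      (if C then space KQ_seq_borel else (\<Union>n. (\<lambda>A. A n) -` Hi (V n) \<inter> space KQ_seq_borel))"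
  proof (intro set_eqI)
    fix A
    show "A \<in> XA -` Hi W \<inter> space KQ_seq_borel \<longleftrightarrow>
      A \<in> (if C then space KQ_seq_borel else (\<Union>n. (\<lambda>A. A n) -` Hi (V n) \<inter> space KQ_seq_borel))"
    proof (cases "A \<in> space KQ_seq_borel")
      case True
      then have K: "\<And>n. A n \<in> KQ" by (simp add: space_seq)
      then have sub: "\<And>n. A n \<subseteq> hilbert_cube" by (auto simp: KQ_def)
      have "XA A \<inter> W \<noteq> {} \<longleftrightarrow> Base \<inter> W \<noteq> {} \<or> (\<exists>n. Top n \<inter> W \<noteq> {}) \<or> (\<exists>n. hairs n (A n) \<inter> W \<noteq> {})"
        unfolding XA_decomp[OF sub] by blast
      then have "XA A \<inter> W \<noteq> {} \<longleftrightarrow> C \<or> (\<exists>n. A n \<inter> V n \<noteq> {})"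
        unfolding C_def V_def hairs_meet by blast
      then show ?thesis using True K XA_KQ[OF K] by (auto simp: Hi_def)
    qed auto
  qed
  have "(\<Union>n. (\<lambda>A. A n) -` Hi (V n) \<inter> space KQ_seq_borel) \<in> sets KQ_seq_borel"
    using comp_sets[OF Hi_sets[OF open_V'[OF assms]]] unfolding V_def
    by (intro sets.countable_UN) auto
  then show ?thesis using eq by simp
qed

lemma XA_meas: "XA \<in> measurable KQ_seq_borel KQ_borel"
proof -
  obtain CB where CB: "countable CB" "\<And>N. N \<in> CB \<Longrightarrow> \<exists>F. finite F \<and> N = KQ \<inter> \<Inter>F \<and>
        (\<forall>S\<in>F. (\<exists>W. open W \<and> S = Lo W) \<or> (\<exists>W. open W \<and> S = Hi W))"
    "\<And>Op K. openin vietoris_KQ Op \<Longrightarrow> K \<in> Op \<Longrightarrow> \<exists>N\<in>CB. K \<in> N \<and> N \<subseteq> Op"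
    using countable_reduction by blast
  have inKQ: "XA A \<in> KQ" if "A \<in> space KQ_seq_borel" for A using that XA_KQ by (simp add: space_seq)
  have Npre: "XA -` N \<inter> space KQ_seq_borel \<in> sets KQ_seq_borel" if N: "N \<in> CB" for N
  proof -
    obtain F where F: "finite F" "N = KQ \<inter> \<Inter>F"
      "\<And>S. S \<in> F \<Longrightarrow> (\<exists>W. open W \<and> S = Lo W) \<or> (\<exists>W. open W \<and> S = Hi W)"
      using CB(2)[OF N] by blast
    have Spre: "XA -` S \<inter> space KQ_seq_borel \<in> sets KQ_seq_borel" if "S \<in> F" for S
      using F(3)[OF that] Lo_pre Hi_pre by blast
    show ?thesis
    proof (cases "F = {}")
      case True
      then have "XA -` N \<inter> space KQ_seq_borel = space KQ_seq_borel" using F inKQ by auto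
      then show ?thesis by simp
    next
      case False
      have "XA -` N \<inter> space KQ_seq_borel = (\<Inter>S\<in>F. XA -` S \<inter> space KQ_seq_borel)"
        using F inKQ False by auto
      moreover have "(\<Inter>S\<in>F. XA -` S \<inter> space KQ_seq_borel) \<in> sets KQ_seq_borel"
        using F(1) False Spre by (intro sets.finite_INT) auto
      ultimately show ?thesis by simp
    qed
  qed
  show ?thesis unfolding KQ_borel_def borel_of_top_def topspace_vietoris
  proof (rule measurable_measure_of)
    show "{U. openin vietoris_KQ U} \<subseteq> Pow KQ" using openin_subset topspace_vietoris by blast
    show "XA \<in> space KQ_seq_borel \<rightarrow> KQ" using inKQ by blast
    fix Op assume "Op \<in> {U. openin vietoris_KQ U}"
    then have O: "openin vietoris_KQ Op" by simp
    have "XA -` Op \<inter> space KQ_seq_borel = \<Union>((\<lambda>N. XA -` N \<inter> space KQ_seq_borel) ` {N \<in> CB. N \<subseteq> Op})"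
    proof (rule set_eqI)
      fix A
      show "A \<in> XA -` Op \<inter> space KQ_seq_borel \<longleftrightarrow> A \<in> \<Union>((\<lambda>N. XA -` N \<inter> space KQ_seq_borel) ` {N \<in> CB. N \<subseteq> Op})"
      proof
        assume a: "A \<in> XA -` Op \<inter> space KQ_seq_borel"
        then obtain N where "N \<in> CB" "XA A \<in> N" "N \<subseteq> Op" using CB(3)[OF O, of "XA A"] by auto
        then show "A \<in> \<Union>((\<lambda>N. XA -` N \<inter> space KQ_seq_borel) ` {N \<in> CB. N \<subseteq> Op})" using a by blast
      qed blast
    qed
    moreover have "\<Union>((\<lambda>N. XA -` N \<inter> space KQ_seq_borel) ` {N \<in> CB. N \<subseteq> Op}) \<in> sets KQ_seq_borel"
      using CB(1) Npre by (intro sets.countable_Union countable_image) auto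
    ultimately show "XA -` Op \<inter> space KQ_seq_borel \<in> sets KQ_seq_borel" by simp
  qed
qed


theorem proposition5:
  shows "borel_reducible KQ_seq_borel perm_equiv triples_borel equiv_11"
proof -
  define \<Phi> where "\<Phi> A = (XA A, XA A, Base)" for A
  have KQsp: "KQs A" if "A \<in> space KQ_seq_borel" for A using that by (simp add: space_seq KQs_def)
  have meas: "\<Phi> \<in> measurable KQ_seq_borel triples_borel"
    unfolding triples_borel_def
  proof (rule measurable_restrict_space2)
    show "\<Phi> \<in> space KQ_seq_borel \<rightarrow> triples"
    proof
      fix A assume "A \<in> space KQ_seq_borel"
      then have "\<And>n. A n \<in> KQ" by (simp add: space_seq)
      then show "\<Phi> A \<in> triples"
        using XA_KQ Base_KQ perfect_XA Base_sub_XA by (simp add: triples_def \<Phi>_def)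
    qed
    have "(\<lambda>A. Base) \<in> measurable KQ_seq_borel KQ_borel"
      by (rule measurable_const) (simp add: space_KQ_borel Base_KQ)
    then show "\<Phi> \<in> measurable KQ_seq_borel (KQ_borel \<Otimes>\<^sub>M (KQ_borel \<Otimes>\<^sub>M KQ_borel))"
      unfolding \<Phi>_def by (intro measurable_Pair XA_meas)
  qed
  have eqv: "perm_equiv A A' \<longleftrightarrow> equiv_11 (\<Phi> A) (\<Phi> A')"
    if "A \<in> space KQ_seq_borel" "A' \<in> space KQ_seq_borel" for A A'
  proof -
    have A: "KQs A" and A': "KQs A'" using KQsp that by auto
    have e: "equiv_11 (\<Phi> A) (\<Phi> A') \<longleftrightarrow>
      (\<exists>f g. homeomorphism (XA A) (XA A') f g \<and> f ` Base = Base \<and> f ` XA A = XA A')"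
      by (simp add: equiv_11_def \<Phi>_def)
    show ?thesis
    proof
      assume "perm_equiv A A'"
      then obtain F G where hF: "homeomorphism (XA A) (XA A') F G" "F ` Base = Base"
        using forward[OF A A'] by blast
      moreover have "F ` XA A = XA A'" by (rule homeomorphism_image1[OF hF(1)])
      ultimately show "equiv_11 (\<Phi> A) (\<Phi> A')" using e by blast
    next
      assume "equiv_11 (\<Phi> A) (\<Phi> A')"
      then obtain F G where "homeomorphism (XA A) (XA A') F G" "F ` Base = Base" using e by blast
      then show "perm_equiv A A'" using backward[OF A A'] by blast
    qed
  qed
  show ?thesis unfolding borel_reducible_def using meas eqv by blast
qed

end
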